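(* Let $N\ge 1$ and let $A=(A_1,\dots,A_{2N})\in(\mathbb{R}_{>0})^{2N}$ satisfy $\sum_{l=1}^N A_{2l}<\sum_{l=1}^N A_{2l-1}$ and the highest weight condition. Run Algorithm I on $x^{(1)}=A$, producing $u\ge1$ and pairs $(\mu^{(i)},\nu^{(i)})_{1\le i\le u}$, and put $\lambda^{(i)}=\sum_{l=1}^{i}\mu^{(l)}$. Let $\ell_1\le\ell_2\le\cdots\le\ell_N$ be the list consisting of $\lambda^{(1)}$ repeated $\nu^{(1)}$ times, followed by $\lambda^{(2)}$ repeated $\nu^{(2)}$ times, ..., followed by $\lambda^{(u)}$ repeated $\nu^{(u)}$ times (this list has exactly $N$ terms). Then for every $1\le k\le N$, $$\sum_{j=1}^{k}\ell_j=\min_{\substack{1\le i_1\triangleleft i_2\triangleleft\cdots\triangleleft i_k\le 2N\\ (i_1,i_k)\neq(1,2N)}}\big(A_{i_1}+A_{i_2}+\cdots+A_{i_k}\big)=:H_k.$$ (Equivalently: the Young diagram with $\nu^{(i)}$ rows of length $\lambda^{(i)}$ has, below height $k$ from its bottom, area $H_k$, the $k$th conserved quantity of the tropical periodic Toda lattice.)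
   Context: For integers $i,j$, $i\triangleleft j$ means $i+1<j$; the minimum runs over index tuples $1\le i_1<\dots<i_k\le 2N$ with consecutive indices differing by at least $2$, excluding tuples with $i_1=1$ and $i_k=2N$ simultaneously. Highest weight condition: a sequence $x_1,\dots,x_{2n}$ of nonnegative reals satisfies it if $\sum_{i=1}^k(x_{2i-1}-x_{2i})\ge0$ for all $1\le k\le n$. Algorithm I. Set $N^{(1)}=N$, $x^{(1)}=A$. Given $x^{(i)}=(x^{(i)}_1,\dots,x^{(i)}_{2N^{(i)}})$ of positive reals satisfying the highest weight condition: let $\mu^{(i)}=\min_j x^{(i)}_j$ and $y^{(i)}_j=x^{(i)}_j-\mu^{(i)}$. In the (linear, non-cyclic) array $y^{(i)}_1,\dots,y^{(i)}_{2N^{(i)}}$ consider the maximal runs of consecutive zeros (a lone zero counts as a run); say there are $k^{(i)}$ runs with lengths $n^{(i)}_1,\dots,n^{(i)}_{k^{(i)}}$ (from left to right). Let $N^{(i+1)}=N^{(i)}-\sum_{j}\lceil n^{(i)}_j/2\rceil$ and $\nu^{(i)}=N^{(i)}-N^{(i+1)}$. If $N^{(i+1)}=0$, stop and set $u=i$. Otherwise form $x^{(i+1)}$ from $y^{(i)}$ as follows: (a) if a run of zeros is at the left end of the array, delete it (its length is even); (b) for every run of zeros lying between positive entries $a,b$ (as $\dots,a,0,\dots,0,b,\dots$), delete the zeros if the run length is even, and if it is odd delete the zeros and also replace $a,b$ by the single entry $a+b$; (c) if a run of zeros is at the right end, preceded by a positive entry $a$, delete the zeros, and if its length is odd also delete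 $a$ and add $a$ to the first entry of the resulting array. The result is an array $x^{(i+1)}$ of $2N^{(i+1)}$ positive reals satisfying the highest weight condition; repeat. *)

theory Defs
  imports Complex_Main
begin

(* Arrays x_1..x_{2N} are real lists; x_i is  x ! (i - 1). *)

definition highest_weight :: "real list \<Rightarrow> bool" where
  "highest_weight x \<longleftrightarrow>
     (\<forall>k\<in>{1..length x div 2}. (\<Sum>i=1..k. x ! (2*i - 2) - x ! (2*i - 1)) \<ge> 0)"

(* lengths of the maximal runs of consecutive zeros, left to right;
   the first argument counts the zeros of the current run *)
fun zruns_aux :: "nat \<Rightarrow> real list \<Rightarrow> nat list" where
  "zruns_aux c [] = (if c > 0 then [c] else [])"
| "zruns_aux c (v # vs) =
     (if v = 0 then zruns_aux (Suc c) vs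
      else if c > 0 then c # zruns_aux 0 vs else zruns_aux 0 vs)"

definition zero_runs :: "real list \<Rightarrow> nat list" where
  "zero_runs y = zruns_aux 0 y"

definition nu_of :: "real list \<Rightarrow> nat" where
  "nu_of y = sum_list (map (\<lambda>n. (n + 1) div 2) (zero_runs y))"

(* split an array starting with a positive entry into blocks (p, z):
   a positive entry p followed by exactly z zeros *)
function blocks :: "real list \<Rightarrow> (real \<times> nat) list" where
  "blocks [] = []"
| "blocks (v # vs) = (v, length (takeWhile (\<lambda>w. w = 0) vs)) # blocks (dropWhile (\<lambda>w. w = 0) vs)"
  by pat_completeness auto
termination
  by (relation "measure length") (auto simp: le_imp_less_Suc length_dropWhile_le)

(* rule (b): an odd run of zeros between positive entries a, b merges them into a + b
   (merges chain left to right); even runs are simply deleted.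
   acc = current merged entry, z = number of zeros following it *)
fun grp :: "real \<Rightarrow> nat \<Rightarrow> (real \<times> nat) list \<Rightarrow> real list" where
  "grp acc z [] = [acc]"
| "grp acc z ((p, z') # bs) = (if odd z then grp (acc + p) z' bs else acc # grp p z' bs)"

(* the passage y^{(i)} \<mapsto> x^{(i+1)}: rule (a) deletes the leading run of zeros,
   rule (b) as above, rule (c): if the final run is odd, the (merged) entry preceding it
   is deleted and added to the first entry *)
definition alg_step :: "real list \<Rightarrow> real list" where
  "alg_step y =
    (case blocks (dropWhile (\<lambda>v. v = 0) y) of
       [] \<Rightarrow> []
     | (p, z) # bs \<Rightarrow>
         (let gs = grp p z bs; zl = snd (last ((p, z) # bs)) in
          if odd zl then
            (case butlast gs of [] \<Rightarrow> [] | g # gs' \<Rightarrow> (g + last gs) # gs')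
          else gs))"

(* Algorithm I, run with fuel f (f = N suffices since each step has nu \<ge> 1);
   returns the pairs (mu^{(i)}, nu^{(i)}), i = 1..u *)
fun algI :: "nat \<Rightarrow> real list \<Rightarrow> (real \<times> nat) list" where
  "algI 0 x = []"
| "algI (Suc f) x =
     (let \<mu> = Min (set x); y = map (\<lambda>v. v - \<mu>) x; \<nu> = nu_of y in
      if length x div 2 - \<nu> = 0 then [(\<mu>, \<nu>)]
      else (\<mu>, \<nu>) # algI f (alg_step y))"

definition lambdas :: "(real \<times> nat) list \<Rightarrow> real list" where
  "lambdas ps = map (\<lambda>i. \<Sum>l<Suc i. fst (ps ! l)) [0..<length ps]"

definition ell_list :: "(real \<times> nat) list \<Rightarrow> real list" where
  "ell_list ps = concat (map (\<lambda>i. replicate (snd (ps ! i)) (lambdas ps ! i)) [0..<length ps])"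

definition admissible :: "nat \<Rightarrow> nat \<Rightarrow> nat list \<Rightarrow> bool" where
  "admissible N k I \<longleftrightarrow> length I = k \<and> set I \<subseteq> {1..2*N}
     \<and> (\<forall>j. Suc j < k \<longrightarrow> I ! j + 1 < I ! Suc j)
     \<and> \<not> (hd I = 1 \<and> last I = 2*N)"

definition H :: "real list \<Rightarrow> nat \<Rightarrow> nat \<Rightarrow> real" where
  "H A N k = Min {(\<Sum>i\<leftarrow>I. A ! (i - 1)) | I. admissible N k I}"

end

theory Submission
  imports Defs
begin


fun noadj :: "bool list \<Rightarrow> bool" where
  "noadj (a # b # l) = (\<not>(a \<and> b) \<and> noadj (b # l))"
| "noadj _ = True"

definition cyc_ok :: "bool list \<Rightarrow> bool" where
  "cyc_ok M \<longleftrightarrow> noadj M \<and> (M \<noteq> [] \<longrightarrow> \<not>(hd M \<and> last M))"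

definition cnt :: "bool list \<Rightarrow> nat" where "cnt M = length (filter id M)"

definition wt :: "bool list \<Rightarrow> real list \<Rightarrow> real" where
  "wt M y = sum_list (map (\<lambda>(b,v). if b then v else 0) (zip M y))"

definition feas :: "real list \<Rightarrow> nat \<Rightarrow> bool list set" where
  "feas y k = {M. length M = length y \<and> cyc_ok M \<and> cnt M = k}"

definition Fc :: "real list \<Rightarrow> nat \<Rightarrow> real" where
  "Fc y k = Min ((\<lambda>M. wt M y) ` feas y k)"

lemma wt_Cons[simp]: "wt (b # M) (v # y) = (if b then v else 0) + wt M y"
  by (simp add: wt_def)
lemma wt_Nil[simp]: "wt [] y = 0" "wt M [] = 0"
  by (auto simp: wt_def)
lemma cnt_Cons[simp]: "cnt (b # M) = (if b then Suc (cnt M) else cnt M)"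
  by (simp add: cnt_def)
lemma cnt_Nil[simp]: "cnt [] = 0" by (simp add: cnt_def)

lemma noadj_Cons: "noadj (a # l) = (noadj l \<and> (l \<noteq> [] \<longrightarrow> \<not>(a \<and> hd l)))"
  by (cases l) auto

lemma noadj_snoc: "noadj (l @ [a]) = (noadj l \<and> (l \<noteq> [] \<longrightarrow> \<not>(last l \<and> a)))"
  by (induction l rule: noadj.induct) auto

lemma finite_feas: "finite (feas y k)"
proof -
  have "feas y k \<subseteq> {xs. set xs \<subseteq> UNIV \<and> length xs = length y}"
    by (auto simp: feas_def)
  moreover have "finite {xs :: bool list. set xs \<subseteq> UNIV \<and> length xs = length y}"
    by (rule finite_lists_length_eq) simp
  ultimately show ?thesis by (rule finite_subset)
qed

lemma Fc_eqI:
  assumes AB: "\<And>M. M \<in> feas y k \<Longrightarrow> \<exists>M'\<in>feas y' k'. wt M' y' \<le> wt M y"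
  and BA: "\<And>M'. M' \<in> feas y' k' \<Longrightarrow> \<exists>M\<in>feas y k. wt M y \<le> wt M' y'"
  shows "Fc y k = Fc y' k'"
proof (cases "feas y k = {}")
  case True
  hence "feas y' k' = {}" using BA by blast
  with True show ?thesis by (simp add: Fc_def)
next
  case False
  hence ne: "feas y k \<noteq> {}" .
  have ne': "feas y' k' \<noteq> {}" using ne AB by blast
  let ?A = "(\<lambda>M. wt M y) ` feas y k" and ?B = "(\<lambda>M. wt M y') ` feas y' k'"
  have fA: "finite ?A" "?A \<noteq> {}" using finite_feas ne by auto
  have fB: "finite ?B" "?B \<noteq> {}" using finite_feas ne' by auto
  have "Min ?A \<in> ?A" using fA by (rule Min_in)
  then obtain M where M: "M \<in> feas y k" "Min ?A = wt M y" by auto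
  obtain M' where M': "M' \<in> feas y' k'" "wt M' y' \<le> wt M y" using AB[OF M(1)] by blast
  have "Min ?B \<le> wt M' y'" using fB M'(1) by auto
  hence 1: "Min ?B \<le> Min ?A" using M M' by linarith
  have "Min ?B \<in> ?B" using fB by (rule Min_in)
  then obtain N where N: "N \<in> feas y' k'" "Min ?B = wt N y'" by auto
  obtain N' where N': "N' \<in> feas y k" "wt N' y \<le> wt N y'" using BA[OF N(1)] by blast
  have "Min ?A \<le> wt N' y" using fA N'(1) by auto
  hence "Min ?A \<le> Min ?B" using N N' by linarith
  with 1 show ?thesis unfolding Fc_def by linarith
qed

lemma Fc_le:
  assumes "M \<in> feas y k" shows "Fc y k \<le> wt M y"
  using assms finite_feas unfolding Fc_def by auto

lemma Fc_ex:
  assumes "feas y k \<noteq> {}" shows "\<exists>M\<in>feas y k. Fc y k = wt M y"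
proof -
  have "Fc y k \<in> (\<lambda>M. wt M y) ` feas y k" unfolding Fc_def
    using finite_feas assms by (intro Min_in) auto
  thus ?thesis by auto
qed

lemma le_mask_noadj: "list_all2 (\<lambda>a b. a \<longrightarrow> b) M' M \<Longrightarrow> noadj M \<Longrightarrow> noadj M'"
proof (induction M arbitrary: M' rule: noadj.induct)
  case (1 a b l)
  then obtain a' b' l' where "M' = a' # b' # l'" by (auto simp: list_all2_Cons2)
  with 1 show ?case by auto
next
  case ("2_1" M') then show ?case by auto
next
  case ("2_2" v M') then show ?case by (auto simp: list_all2_Cons2)
qed

lemma le_mask_hd_last: "list_all2 (\<lambda>a b. a \<longrightarrow> b) M' M \<Longrightarrow> M' \<noteq> [] \<Longrightarrow> (hd M' \<longrightarrow> hd M) \<and> (last M' \<longrightarrow> last M)"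
proof (induction M' M rule: list_all2_induct)
  case Nil then show ?case by simp
next
  case (Cons x xs y ys)
  then show ?case by (cases xs) (auto dest: list_all2_lengthD)
qed

lemma le_mask_cyc: "list_all2 (\<lambda>a b. a \<longrightarrow> b) M' M \<Longrightarrow> cyc_ok M \<Longrightarrow> cyc_ok M'"
  unfolding cyc_ok_def using le_mask_noadj le_mask_hd_last
  by (metis list_all2_Nil2)

lemma le_mask_wt: "list_all2 (\<lambda>a b. a \<longrightarrow> b) M' M \<Longrightarrow> \<forall>v\<in>set y. v \<ge> 0 \<Longrightarrow> wt M' y \<le> wt M y"
proof (induction M' M arbitrary: y rule: list_all2_induct)
  case Nil then show ?case by simp
next
  case (Cons x xs b ys)
  note IH = Cons.IH and pr = Cons.prems and hx = Cons.hyps(1)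
  show ?case
  proof (cases y)
    case Nil then show ?thesis by simp
  next
    case (Cons a l)
    with pr have "a \<ge> 0" "\<forall>v\<in>set l. v \<ge> 0" by auto
    moreover have "wt xs l \<le> wt ys l" using IH calculation(2) by blast
    ultimately show ?thesis using hx \<open>y = a # l\<close> by auto
  qed
qed

lemma drop_one: "cnt M \<ge> 1 \<Longrightarrow> \<exists>M'. list_all2 (\<lambda>a b. a \<longrightarrow> b) M' M \<and> cnt M' = cnt M - 1"
proof (induction M)
  case Nil then show ?case by simp
next
  case (Cons b M)
  show ?case
  proof (cases b)
    case True
    have "list_all2 (\<lambda>a b. a \<longrightarrow> b) (False # M) (b # M)"
      by (simp add: list_all2_refl)
    then show ?thesis using True by (intro exI[of _ "False # M"]) simp
  next
    case False
    then obtain M' where "list_all2 (\<lambda>a b. a \<longrightarrow> b) M' M \<and> cnt M' = cnt M - 1"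
      using Cons by auto
    then show ?thesis using False by (intro exI[of _ "False # M'"]) auto
  qed
qed

lemma drop_one_feas:
  assumes "M \<in> feas y k" "k \<ge> 1" "\<forall>v\<in>set y. v \<ge> 0"
  shows "\<exists>M'\<in>feas y (k - 1). wt M' y \<le> wt M y"
proof -
  obtain M' where M': "list_all2 (\<lambda>a b. a \<longrightarrow> b) M' M" "cnt M' = cnt M - 1"
    using drop_one[of M] assms by (auto simp: feas_def)
  have "M' \<in> feas y (k-1)" using M' assms le_mask_cyc
    by (auto simp: feas_def dest: list_all2_lengthD)
  moreover have "wt M' y \<le> wt M y" using le_mask_wt M' assms by blast
  ultimately show ?thesis by blast
qed



lemma wt_append: "length M1 = length y1 \<Longrightarrow> wt (M1 @ M2) (y1 @ y2) = wt M1 y1 + wt M2 y2"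
  by (simp add: wt_def)
lemma cnt_append: "cnt (M1 @ M2) = cnt M1 + cnt M2" by (simp add: cnt_def)

lemma cyc_ok_rot: "cyc_ok (m # M) \<longleftrightarrow> cyc_ok (M @ [m])"
  by (cases "M = []") (auto simp: cyc_ok_def noadj_Cons noadj_snoc)

lemma Fc_rot: "Fc (v # l) k = Fc (l @ [v]) k"
proof (rule Fc_eqI)
  fix M assume M: "M \<in> feas (v # l) k"
  then obtain m M' where MM: "M = m # M'" and len: "length M' = length l"
    by (cases M) (auto simp: feas_def)
  have "M' @ [m] \<in> feas (l @ [v]) k" using M MM len cyc_ok_rot
    by (auto simp: feas_def cnt_append)
  moreover have "wt (M' @ [m]) (l @ [v]) = wt M (v # l)" using MM len by (simp add: wt_append)
  ultimately show "\<exists>M'\<in>feas (l @ [v]) k. wt M' (l @ [v]) \<le> wt M (v # l)" by force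
next
  fix M assume M: "M \<in> feas (l @ [v]) k"
  hence "M \<noteq> []" by (auto simp: feas_def)
  then obtain M' m where MM: "M = M' @ [m]" by (metis append_butlast_last_id)
  have len: "length M' = length l" using M MM by (auto simp: feas_def)
  have "m # M' \<in> feas (v # l) k" using M MM len cyc_ok_rot
    by (auto simp: feas_def cnt_append)
  moreover have "wt (m # M') (v # l) = wt M (l @ [v])" using MM len by (simp add: wt_append)
  ultimately show "\<exists>M'\<in>feas (v # l) k. wt M' (v # l) \<le> wt M (l @ [v])" by force
qed

lemma Fc_rot_app: "Fc (u @ w) k = Fc (w @ u) k"
proof (induction u arbitrary: w)
  case Nil then show ?case by simp
next
  case (Cons a u)
  have "Fc ((a # u) @ w) k = Fc (u @ w @ [a]) k" using Fc_rot[of a "u @ w"] by simp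
  also have "\<dots> = Fc ((w @ [a]) @ u) k" using Cons[of "w @ [a]"] by simp
  finally show ?case by simp
qed

lemma E1:
  assumes k: "k \<ge> 1" and nn: "\<forall>v\<in>set ys. v \<ge> 0"
  shows "Fc (0 # 0 # ys) k = Fc ys (k - 1)"
proof (rule Fc_eqI)
  fix M assume M: "M \<in> feas (0 # 0 # ys) k"
  then obtain b0 b1 T where MM: "M = b0 # b1 # T" and len: "length T = length ys"
    by (cases M rule: remdups_adj.cases) (auto simp: feas_def)
  have cyc: "cyc_ok (b0 # b1 # T)" and cn: "cnt (b0 # b1 # T) = k" using M MM by (auto simp: feas_def)
  have naT: "noadj T" and nb: "\<not> (b0 \<and> b1)" and nb1: "T \<noteq> [] \<longrightarrow> \<not> (b1 \<and> hd T)"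
    and nbl: "T \<noteq> [] \<longrightarrow> \<not> (b0 \<and> last T)"
    using cyc by (auto simp: cyc_ok_def noadj_Cons)
  have wM: "wt M (0 # 0 # ys) = wt T ys" using MM by simp
  show "\<exists>M'\<in>feas ys (k - 1). wt M' ys \<le> wt M (0 # 0 # ys)"
  proof (cases "b0 \<or> b1")
    case True
    have "cyc_ok T" using True naT nb nb1 nbl cyc by (auto simp: cyc_ok_def)
    moreover have "cnt T = k - 1" using cn True nb by auto
    ultimately have "T \<in> feas ys (k - 1)" using len by (simp add: feas_def)
    thus ?thesis using wM by auto
  next
    case False
    hence cT: "cnt T = k" using cn by auto
    show ?thesis
    proof (cases "T \<noteq> [] \<and> hd T")
      case True
      then obtain T' where TT: "T = True # T'" by (cases T) auto
      have "False # T' \<in> feas ys (k - 1)" using TT cT len naT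
        by (auto simp: feas_def cyc_ok_def noadj_Cons)
      moreover have "wt (False # T') ys \<le> wt T ys" using TT len nn by (cases ys) auto
      ultimately show ?thesis using wM by force
    next
      case False
      hence "T \<in> feas ys k" using naT cT len by (auto simp: feas_def cyc_ok_def)
      then obtain M' where "M' \<in> feas ys (k - 1)" "wt M' ys \<le> wt T ys"
        using drop_one_feas[OF _ k nn] by blast
      thus ?thesis using wM by auto
    qed
  qed
next
  fix T assume T: "T \<in> feas ys (k - 1)"
  hence len: "length T = length ys" and cyc: "cyc_ok T" and cT: "cnt T = k - 1"
    by (auto simp: feas_def)
  show "\<exists>M\<in>feas (0 # 0 # ys) k. wt M (0 # 0 # ys) \<le> wt T ys"
  proof (cases "T = [] \<or> \<not> last T")
    case True
    have "True # False # T \<in> feas (0 # 0 # ys) k" using True cyc cT len k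
      by (auto simp: feas_def cyc_ok_def noadj_Cons)
    thus ?thesis by force
  next
    case False
    hence "\<not> hd T" using cyc by (auto simp: cyc_ok_def)
    hence "False # True # T \<in> feas (0 # 0 # ys) k" using False cyc cT len k
      by (auto simp: feas_def cyc_ok_def noadj_Cons)
    thus ?thesis by force
  qed
qed

lemma E2:
  assumes k: "k \<ge> 1" and nn: "\<forall>v\<in>set ys. v \<ge> 0" and a: "a \<ge> 0" and b: "b \<ge> 0"
    and ne: "ys \<noteq> []"
  shows "Fc (a # 0 # b # ys) k = Fc ((a + b) # ys) (k - 1)"
proof (rule Fc_eqI)
  have nn': "\<forall>v\<in>set ((a + b) # ys). v \<ge> 0" using nn a b by auto
  fix M assume M: "M \<in> feas (a # 0 # b # ys) k"
  then obtain c0 c1 c2 T where MM: "M = c0 # c1 # c2 # T" and len: "length T = length ys"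
    by (cases M rule: remdups_adj.cases; cases "tl (tl M)") (auto simp: feas_def)
  have Tne: "T \<noteq> []" using len ne by auto
  have cyc: "cyc_ok (c0 # c1 # c2 # T)" and cn: "cnt (c0 # c1 # c2 # T) = k" using M MM by (auto simp: feas_def)
  have naT: "noadj T" and n01: "\<not> (c0 \<and> c1)" and n12: "\<not> (c1 \<and> c2)" and n2T: "\<not> (c2 \<and> hd T)"
    and nl: "\<not> (c0 \<and> last T)"
    using cyc Tne by (auto simp: cyc_ok_def noadj_Cons)
  have wM: "wt M (a # 0 # b # ys) = (if c0 then a else 0) + (if c2 then b else 0) + wt T ys"
    using MM by simp
  show "\<exists>M'\<in>feas ((a + b) # ys) (k - 1). wt M' ((a + b) # ys) \<le> wt M (a # 0 # b # ys)"
  proof (cases "c1")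
    case True
    hence "False # T \<in> feas ((a + b) # ys) (k - 1)" using cn n01 n12 naT len
      by (auto simp: feas_def cyc_ok_def noadj_Cons)
    moreover have "wt (False # T) ((a + b) # ys) = wt M (a # 0 # b # ys)" using wM True n01 n12 by simp
    ultimately show ?thesis by force
  next
    case c1: False
    show ?thesis
    proof (cases "c0 \<and> c2")
      case True
      hence "True # T \<in> feas ((a + b) # ys) (k - 1)" using cn c1 naT len n2T nl Tne
        by (auto simp: feas_def cyc_ok_def noadj_Cons)
      moreover have "wt (True # T) ((a + b) # ys) = wt M (a # 0 # b # ys)" using wM True by simp
      ultimately show ?thesis by force
    next
      case False
      show ?thesis
      proof (cases "c0 \<or> c2")
        case True
        hence "False # T \<in> feas ((a + b) # ys) (k - 1)" using cn c1 False naT len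
          by (auto simp: feas_def cyc_ok_def noadj_Cons)
        moreover have "wt (False # T) ((a + b) # ys) \<le> wt M (a # 0 # b # ys)" using wM a b by auto
        ultimately show ?thesis by force
      next
        case False
        hence "False # T \<in> feas ((a + b) # ys) k" using cn c1 naT len
          by (auto simp: feas_def cyc_ok_def noadj_Cons)
        then obtain M' where "M' \<in> feas ((a + b) # ys) (k - 1)" "wt M' ((a + b) # ys) \<le> wt (False # T) ((a + b) # ys)"
          using drop_one_feas[OF _ k nn'] by blast
        moreover have "wt (False # T) ((a + b) # ys) = wt M (a # 0 # b # ys)" using wM False by simp
        ultimately show ?thesis by force
      qed
    qed
  qed
next
  fix M assume M: "M \<in> feas ((a + b) # ys) (k - 1)"
  then obtain d T where MM: "M = d # T" and len: "length T = length ys"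
    by (cases M) (auto simp: feas_def)
  have Tne: "T \<noteq> []" using len ne by auto
  have cyc: "cyc_ok (d # T)" and cn: "cnt (d # T) = k - 1" using M MM by (auto simp: feas_def)
  show "\<exists>M'\<in>feas (a # 0 # b # ys) k. wt M' (a # 0 # b # ys) \<le> wt M ((a + b) # ys)"
  proof (cases d)
    case True
    hence "True # False # True # T \<in> feas (a # 0 # b # ys) k" using cyc cn len Tne k
      by (auto simp: feas_def cyc_ok_def noadj_Cons)
    moreover have "wt (True # False # True # T) (a # 0 # b # ys) = wt M ((a + b) # ys)" using MM True by simp
    ultimately show ?thesis by force
  next
    case False
    hence "False # True # False # T \<in> feas (a # 0 # b # ys) k" using cyc cn len Tne k
      by (auto simp: feas_def cyc_ok_def noadj_Cons)
    moreover have "wt (False # True # False # T) (a # 0 # b # ys) = wt M ((a + b) # ys)" using MM False by simp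
    ultimately show ?thesis by force
  qed
qed

lemma E_small:
  assumes k: "k \<ge> 1" and g: "g \<ge> 0"
  shows "Fc [g, 0] k = Fc [] (k - 1)"
proof (rule Fc_eqI)
  fix M assume M: "M \<in> feas [g, 0] k"
  then obtain c0 c1 where MM: "M = [c0, c1]"
    by (cases M rule: remdups_adj.cases) (auto simp: feas_def)
  have "\<not> (c0 \<and> c1)" "cnt [c0, c1] = k" using M MM by (auto simp: feas_def cyc_ok_def)
  hence "k = 1" using k by (cases c0; cases c1) auto
  hence "[] \<in> feas [] (k - 1)" by (simp add: feas_def cyc_ok_def)
  moreover have "0 \<le> wt M [g, 0]" using MM g by simp
  ultimately show "\<exists>M'\<in>feas [] (k - 1). wt M' [] \<le> wt M [g, 0]" by force
next
  fix M assume M: "M \<in> feas [] (k - 1)"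
  hence "k = 1" "M = []" using k by (auto simp: feas_def)
  hence "[False, True] \<in> feas [g, 0] k" by (simp add: feas_def cyc_ok_def)
  thus "\<exists>M'\<in>feas [g, 0] k. wt M' [g, 0] \<le> wt M []" using \<open>M = []\<close> by force
qed

lemma feas_ne_aux: "2 * k \<le> n \<Longrightarrow> \<exists>M. length M = n \<and> noadj M \<and> cnt M = k \<and> (M = [] \<or> \<not> last M)"
proof (induction k arbitrary: n)
  case 0
  have "noadj (replicate n False)" by (induction n) (auto simp: noadj_Cons)
  moreover have "cnt (replicate n False) = 0" by (simp add: cnt_def)
  ultimately show ?case by (intro exI[of _ "replicate n False"]) (auto simp: last_replicate)
next
  case (Suc k)
  then obtain M where M: "length M = n - 2" "noadj M" "cnt M = k" "M = [] \<or> \<not> last M"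
  proof -
    have "2 * k \<le> n - 2" using Suc.prems by simp
    from Suc.IH[OF this] show ?thesis using that by blast
  qed
  show ?case using M Suc.prems
    by (intro exI[of _ "True # False # M"]) (auto simp: noadj_Cons)
qed

lemma feas_ne: "2 * k \<le> length y \<Longrightarrow> feas y k \<noteq> {}"
proof -
  assume "2 * k \<le> length y"
  then obtain M where M: "length M = length y" "noadj M" "cnt M = k" "M = [] \<or> \<not> last M"
    using feas_ne_aux by blast
  hence "M \<in> feas y k" by (auto simp: feas_def cyc_ok_def)
  thus ?thesis by blast
qed

lemma wt_nonneg: "\<forall>v\<in>set y. v \<ge> 0 \<Longrightarrow> wt M y \<ge> 0"
proof (induction M arbitrary: y)
  case Nil then show ?case by simp
next
  case (Cons b M) then show ?case by (cases y) auto
qed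

lemma Fc_nonneg: "\<forall>v\<in>set y. v \<ge> 0 \<Longrightarrow> feas y k \<noteq> {} \<Longrightarrow> Fc y k \<ge> 0"
  using Fc_ex wt_nonneg by metis

lemma Fc_mono: "\<forall>v\<in>set y. v \<ge> 0 \<Longrightarrow> feas y (Suc k) \<noteq> {} \<Longrightarrow> Fc y k \<le> Fc y (Suc k)"
proof -
  assume nn: "\<forall>v\<in>set y. v \<ge> 0" and ne: "feas y (Suc k) \<noteq> {}"
  obtain M where M: "M \<in> feas y (Suc k)" "Fc y (Suc k) = wt M y" using Fc_ex[OF ne] by blast
  obtain M' where "M' \<in> feas y k" "wt M' y \<le> wt M y" using drop_one_feas[OF M(1) _ nn] by auto
  thus ?thesis using M Fc_le by fastforce
qed

lemma Fc_Nil: "Fc [] 0 = 0"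
proof -
  have "feas [] 0 = {[]}" by (auto simp: feas_def cyc_ok_def)
  thus ?thesis by (simp add: Fc_def)
qed

lemma Fc_zeros: "\<forall>v\<in>set l. v \<ge> 0 \<Longrightarrow> a \<le> k \<Longrightarrow> Fc (replicate (2 * a) 0 @ l) k = Fc l (k - a)"
proof (induction a arbitrary: k)
  case 0 then show ?case by simp
next
  case (Suc a)
  have nn: "\<forall>v\<in>set (replicate (2 * a) 0 @ l). v \<ge> (0::real)" using Suc.prems by auto
  have "replicate (2 * Suc a) 0 @ l = 0 # 0 # (replicate (2 * a) 0 @ l)" by simp
  hence "Fc (replicate (2 * Suc a) 0 @ l) k = Fc (replicate (2 * a) 0 @ l) (k - 1)"
    using E1[OF _ nn] Suc.prems by simp
  also have "\<dots> = Fc l (k - 1 - a)" using Suc by simp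
  finally show ?case by simp
qed

lemma Fc_zeros_after: "\<forall>v\<in>set l. v \<ge> 0 \<Longrightarrow> acc \<ge> 0 \<Longrightarrow> a \<le> k \<Longrightarrow>
   Fc (acc # replicate (2 * a) 0 @ l) k = Fc (acc # l) (k - a)"
proof -
  assume h: "\<forall>v\<in>set l. v \<ge> 0" "acc \<ge> 0" "a \<le> k"
  have "Fc (acc # replicate (2 * a) 0 @ l) k = Fc (replicate (2 * a) 0 @ (l @ [acc])) k"
    using Fc_rot[of acc "replicate (2 * a) 0 @ l"] by simp
  also have "\<dots> = Fc (l @ [acc]) (k - a)" using h by (intro Fc_zeros) auto
  also have "\<dots> = Fc (acc # l) (k - a)" using Fc_rot by simp
  finally show ?thesis .
qed



fun flat :: "(real \<times> nat) list \<Rightarrow> real list" where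
  "flat [] = []"
| "flat ((p, z) # bs) = p # replicate z 0 @ flat bs"

fun cc :: "nat \<Rightarrow> (real \<times> nat) list \<Rightarrow> nat" where
  "cc z [] = z div 2"
| "cc z ((p, z') # bs) = (z + 1) div 2 + cc z' bs"

fun zl :: "nat \<Rightarrow> (real \<times> nat) list \<Rightarrow> nat" where
  "zl z [] = z"
| "zl z ((p, z') # bs) = zl z' bs"

lemma takeWhile_zero: "takeWhile (\<lambda>v. v = (0::real)) l = replicate (length (takeWhile (\<lambda>v. v = 0) l)) 0"
  by (metis (mono_tags, lifting) replicate_length_same set_takeWhileD)

lemma flat_blocks: "flat (blocks l) = l"
proof (induction l rule: blocks.induct)
  case 1 then show ?case by simp
next
  case (2 v vs)
  have r: "replicate (length (takeWhile (\<lambda>w. w = 0) vs)) 0 = takeWhile (\<lambda>w. w = (0::real)) vs"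
    using takeWhile_zero[of vs] by metis
  have "flat (blocks (v # vs)) = v # takeWhile (\<lambda>w. w = 0) vs @ dropWhile (\<lambda>w. w = 0) vs"
    using 2 by (simp only: blocks.simps flat.simps r)
  then show ?case by simp
qed

lemma blocks_nz: "(l = [] \<or> hd l \<noteq> 0) \<Longrightarrow> (p, z) \<in> set (blocks l) \<Longrightarrow> p \<noteq> 0"
proof (induction l arbitrary: p z rule: blocks.induct)
  case 1 then show ?case by simp
next
  case (2 v vs)
  have h: "dropWhile (\<lambda>w. w = 0) vs = [] \<or> hd (dropWhile (\<lambda>w. w = 0) vs) \<noteq> 0"
    using hd_dropWhile[of "\<lambda>w. w = (0::real)" vs] by blast
  have mem: "(p, z) \<in> set ((v, length (takeWhile (\<lambda>w. w = 0) vs)) # blocks (dropWhile (\<lambda>w. w = 0) vs))"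
    using 2(3) by (simp only: blocks.simps)
  show ?case
  proof (cases "(p, z) \<in> set (blocks (dropWhile (\<lambda>w. w = 0) vs))")
    case True show ?thesis using 2(1)[OF h True] by simp
  next
    case False
    hence "p = v" using mem by simp
    then show ?thesis using 2(2) by simp
  qed
qed

lemma flat_set: "(p, z) \<in> set bs \<Longrightarrow> p \<in> set (flat bs)"
  by (induction bs rule: flat.induct) auto

lemma zl_last: "snd (last ((p, z) # bs)) = zl z bs"
  by (induction bs arbitrary: p z) auto

lemma grp_nonneg: "acc \<ge> 0 \<Longrightarrow> \<forall>v\<in>set (flat bs). v \<ge> 0 \<Longrightarrow> \<forall>v\<in>set (grp acc z bs). v \<ge> 0"
  by (induction acc z bs rule: grp.induct) auto

lemma grp_len: "length (grp acc z bs) + 2 * cc z bs + zl z bs mod 2 = length (acc # replicate z 0 @ flat bs)"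
proof (induction acc z bs rule: grp.induct)
  case (1 acc z) then show ?case by simp
next
  case (2 acc z p z' bs)
  show ?case
  proof (cases "odd z")
    case True
    with 2 have "length (grp (acc + p) z' bs) + 2 * cc z' bs + zl z' bs mod 2 = length ((acc + p) # replicate z' 0 @ flat bs)" by simp
    moreover have "2 * ((z + 1) div 2) = z + 1" using True by presburger
    ultimately show ?thesis using True
      by (simp only: grp.simps cc.simps zl.simps if_P[OF True] length_Cons length_append length_replicate flat.simps not_False_eq_True if_True if_False add_mult_distrib2)
  next
    case False
    with 2 have "length (grp p z' bs) + 2 * cc z' bs + zl z' bs mod 2 = length (p # replicate z' 0 @ flat bs)" by simp
    moreover have "2 * ((z + 1) div 2) = z" using False by presburger
    ultimately show ?thesis using False
      by (simp only: grp.simps cc.simps zl.simps if_not_P[OF False] length_Cons length_append length_replicate flat.simps not_False_eq_True if_True if_False add_mult_distrib2)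
  qed
qed

lemma G:
  assumes "acc \<ge> 0" "\<forall>v\<in>set (flat bs). v \<ge> 0" "\<forall>v\<in>set P. v \<ge> 0"
    and "even (length (acc # replicate z 0 @ flat bs @ P))" "cc z bs \<le> k"
  shows "Fc (acc # replicate z 0 @ flat bs @ P) k
       = Fc (grp acc z bs @ replicate (zl z bs mod 2) 0 @ P) (k - cc z bs)"
  using assms
proof (induction acc z bs arbitrary: P k rule: grp.induct)
  case (1 acc z)
  have "replicate z (0::real) @ P = replicate (2 * (z div 2)) 0 @ (replicate (z mod 2) 0 @ P)"
    by (metis div_mult_mod_eq mult.commute replicate_add append_assoc)
  hence "Fc (acc # replicate z 0 @ flat [] @ P) k = Fc (acc # replicate (2 * (z div 2)) 0 @ (replicate (z mod 2) 0 @ P)) k"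
    by simp
  also have "\<dots> = Fc (acc # replicate (z mod 2) 0 @ P) (k - z div 2)"
    using 1 by (intro Fc_zeros_after) auto
  finally show ?case by simp
next
  case (2 acc z p z' bs)
  let ?R = "replicate z' 0 @ flat bs @ P"
  have nnR: "\<forall>v\<in>set ?R. v \<ge> 0" and p: "p \<ge> 0" and nnb: "\<forall>v\<in>set (flat bs). v \<ge> 0" using 2 by auto
  define L where "L = length (flat bs) + length P"
  have "length (acc # replicate z 0 @ flat ((p, z') # bs) @ P) = z + z' + L + 2" by (simp add: L_def)
  hence ev: "even (z + z' + L)" using 2(6) by presburger
  have kk: "(z + 1) div 2 + cc z' bs \<le> k" using 2(7) by simp
  show ?case
  proof (cases "odd z")
    case True
    obtain b where zb: "z = 2 * b + 1" using True oddE by blast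
    have zd: "z div 2 = b" "(z + 1) div 2 = b + 1" using zb by simp_all
    have eq: "replicate z (0::real) @ flat ((p, z') # bs) @ P = replicate (2 * (z div 2)) 0 @ (0 # p # ?R)"
      unfolding zd zb replicate_add by simp
    have "Fc (acc # replicate z 0 @ flat ((p, z') # bs) @ P) k = Fc (acc # 0 # p # ?R) (k - z div 2)"
      unfolding eq using 2(3) 2(5) nnR p kk zd by (intro Fc_zeros_after) simp_all
    also have "\<dots> = Fc ((acc + p) # ?R) (k - z div 2 - 1)"
    proof (rule E2)
      have "length ?R = z' + L" by (simp add: L_def)
      hence "odd (length ?R)" using ev zb by presburger
      thus "?R \<noteq> []" by auto
      show "1 \<le> k - z div 2" using kk zd by simp
    qed (use nnR p 2(3) in simp_all)
    also have "\<dots> = Fc (grp (acc + p) z' bs @ replicate (zl z' bs mod 2) 0 @ P) (k - z div 2 - 1 - cc z' bs)"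
    proof (rule 2(1)[OF True])
      have "length ((acc + p) # replicate z' 0 @ flat bs @ P) = z' + L + 1" by (simp add: L_def)
      thus "even (length ((acc + p) # replicate z' 0 @ flat bs @ P))" using ev zb by presburger
      show "cc z' bs \<le> k - z div 2 - 1" using kk zd by simp
    qed (use 2(3) 2(5) p nnb in simp_all)
    finally show ?thesis using True zd by simp
  next
    case False
    obtain b where zb: "z = 2 * b" using False evenE by blast
    have zd: "z div 2 = b" "(z + 1) div 2 = b" using zb by simp_all
    have eq: "replicate z (0::real) @ flat ((p, z') # bs) @ P = replicate (2 * (z div 2)) 0 @ (p # ?R)"
      unfolding zd zb by simp
    have "Fc (acc # replicate z 0 @ flat ((p, z') # bs) @ P) k = Fc (acc # p # ?R) (k - z div 2)"
      unfolding eq using 2(3) 2(5) nnR p kk zd by (intro Fc_zeros_after) simp_all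
    also have "\<dots> = Fc (p # replicate z' 0 @ flat bs @ (P @ [acc])) (k - z div 2)"
      using Fc_rot[of acc "p # ?R"] by simp
    also have "\<dots> = Fc (grp p z' bs @ replicate (zl z' bs mod 2) 0 @ (P @ [acc])) (k - z div 2 - cc z' bs)"
    proof (rule 2(2)[OF False])
      have "length (p # replicate z' 0 @ flat bs @ P @ [acc]) = z' + L + 2" by (simp add: L_def)
      thus "even (length (p # replicate z' 0 @ flat bs @ P @ [acc]))" using ev zb by presburger
      show "cc z' bs \<le> k - z div 2" using kk zd by simp
    qed (use 2(3) 2(5) p nnb in simp_all)
    also have "\<dots> = Fc (acc # grp p z' bs @ replicate (zl z' bs mod 2) 0 @ P) (k - z div 2 - cc z' bs)"
      using Fc_rot[of acc "grp p z' bs @ replicate (zl z' bs mod 2) 0 @ P"] by simp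
    finally show ?thesis using False zd by simp
  qed
qed



definition S :: "nat \<Rightarrow> real list \<Rightarrow> nat" where
  "S c l = sum_list (map (\<lambda>n. (n + 1) div 2) (zruns_aux c l))"

lemma zr_rep: "zruns_aux c (replicate n 0 @ l) = zruns_aux (c + n) l"
  by (induction n arbitrary: c) auto

lemma S_nz: "v \<noteq> 0 \<Longrightarrow> S c (v # l) = (c + 1) div 2 + S 0 l"
  by (simp add: S_def)

lemma S_nil: "S c [] = (c + 1) div 2"
  by (simp add: S_def)

lemma S_rep: "S c (replicate n 0 @ l) = S (c + n) l"
  by (simp add: S_def zr_rep)

lemma S_flat: "\<forall>q\<in>set ((p, z) # bs). fst q \<noteq> 0 \<Longrightarrow>
   S c (flat ((p, z) # bs)) = (c + 1) div 2 + cc z bs + zl z bs mod 2"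
proof (induction bs arbitrary: c p z)
  case Nil
  have "S c (flat [(p, z)]) = (c + 1) div 2 + S 0 (replicate z 0 @ [])"
    using Nil by (simp add: S_nz)
  also have "\<dots> = (c + 1) div 2 + (z + 1) div 2" by (simp only: S_rep S_nil)
  moreover have "(z + 1) div 2 = z div 2 + z mod 2" by presburger
  ultimately show ?case by simp
next
  case (Cons q bs)
  obtain p' z' where q: "q = (p', z')" by (cases q)
  have "S c (flat ((p, z) # q # bs)) = (c + 1) div 2 + S 0 (replicate z 0 @ flat ((p', z') # bs))"
    using Cons.prems q by (simp add: S_nz)
  also have "\<dots> = (c + 1) div 2 + S z (flat ((p', z') # bs))" by (simp only: S_rep) simp
  also have "\<dots> = (c + 1) div 2 + ((z + 1) div 2 + cc z' bs + zl z' bs mod 2)"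
    using Cons.IH[of p' z' z] Cons.prems q by simp
  finally show ?case using q by simp
qed

lemma S_pos: "c > 0 \<or> 0 \<in> set l \<Longrightarrow> S c l \<ge> 1"
proof (induction l arbitrary: c)
  case Nil then show ?case by (simp add: S_nil)
next
  case (Cons v l)
  show ?case
  proof (cases "v = 0")
    case True
    have "S c (v # l) = S (Suc c) l" using True by (simp add: S_def)
    moreover have "S (Suc c) l \<ge> 1" using Cons.IH by simp
    ultimately show ?thesis by simp
  next
    case False
    have "S c (v # l) = (c + 1) div 2 + S 0 l" using False S_nz by simp
    moreover have "c > 0 \<or> 0 \<in> set l" using Cons.prems False by simp
    ultimately show ?thesis using Cons.IH[of 0] by auto
  qed
qed

lemma nu_S: "nu_of y = S 0 y" by (simp add: nu_of_def zero_runs_def S_def)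

lemma R:
  assumes nn: "\<forall>v\<in>set y. v \<ge> 0" and ev: "even (length y)"
    and lead: "even (length (takeWhile (\<lambda>v. v = 0) y))"
  shows "length (alg_step y) + 2 * nu_of y = length y \<and> (\<forall>v\<in>set (alg_step y). v \<ge> 0)
     \<and> (\<forall>k. nu_of y \<le> k \<longrightarrow> Fc y k = Fc (alg_step y) (k - nu_of y))"
proof -
  obtain a where la: "length (takeWhile (\<lambda>v. v = 0) y) = 2 * a" using lead by (auto elim!: evenE)
  define y1 where "y1 = dropWhile (\<lambda>v. v = 0) y"
  have yeq: "y = replicate (2 * a) 0 @ y1"
    using takeWhile_dropWhile_id[of "\<lambda>v. v = 0" y] takeWhile_zero[of y] la y1_def by metis
  have nn1: "\<forall>v\<in>set y1. v \<ge> 0" using nn yeq by auto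
  have Fy: "\<And>k. a \<le> k \<Longrightarrow> Fc y k = Fc y1 (k - a)" using yeq nn1 Fc_zeros by simp
  have Sy: "nu_of y = S (2 * a) y1" using yeq by (simp add: nu_S S_rep)
  have ev1: "even (length y1)" using ev yeq by simp
  show ?thesis
  proof (cases y1)
    case Nil
    have as: "alg_step y = []" unfolding alg_step_def y1_def[symmetric] Nil by simp
    have nu: "nu_of y = a" using Sy Nil by (simp add: S_nil)
    show ?thesis using as nu Fy Nil yeq by simp
  next
    case (Cons v vs)
    have v0: "v \<noteq> 0" using Cons y1_def hd_dropWhile[of "\<lambda>v. v = (0::real)" y] by auto
    obtain p z bs where bl: "blocks y1 = (p, z) # bs" using Cons by simp
    have fl: "flat ((p, z) # bs) = y1" using flat_blocks[of y1] bl by simp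
    have nz: "\<forall>q\<in>set ((p, z) # bs). fst q \<noteq> 0"
      using blocks_nz[of y1] Cons v0 bl by (metis list.distinct(1) list.sel(1) prod.collapse)
    have nnp: "\<forall>v\<in>set (flat ((p, z) # bs)). v \<ge> 0" using fl nn1 by simp
    have p0: "p \<ge> 0" and nnb: "\<forall>v\<in>set (flat bs). v \<ge> 0" using nnp by auto
    have nu: "nu_of y = a + cc z bs + zl z bs mod 2"
      using Sy fl S_flat[OF nz, of "2 * a"] by simp
    define gs where "gs = grp p z bs"
    have gnn: "\<forall>v\<in>set gs. v \<ge> 0" using grp_nonneg[OF p0 nnb] gs_def by simp
    have glen: "length gs + 2 * cc z bs + zl z bs mod 2 = length y1"
      using grp_len[of p z bs] gs_def by (simp add: fl[symmetric])
    have G1: "\<And>k'. cc z bs \<le> k' \<Longrightarrow> Fc y1 k' = Fc (gs @ replicate (zl z bs mod 2) 0) (k' - cc z bs)"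
      using G[OF p0 nnb, of "[]" z] ev1 gs_def by (simp add: fl[symmetric])
    have as0: "alg_step y = (if odd (zl z bs) then (case butlast gs of [] \<Rightarrow> [] | g # gs' \<Rightarrow> (g + last gs) # gs') else gs)"
      unfolding gs_def using bl y1_def zl_last[of p z bs] by (simp add: alg_step_def Let_def)
    show ?thesis
    proof (cases "odd (zl z bs)")
      case False
      have as: "alg_step y = gs" using as0 False by simp
      have zm: "zl z bs mod 2 = 0" using False by presburger
      show ?thesis
      proof (intro conjI allI impI)
        show "length (alg_step y) + 2 * nu_of y = length y" using as nu glen zm yeq by simp
        show "\<forall>v\<in>set (alg_step y). v \<ge> 0" using as gnn by simp
        fix k assume k: "nu_of y \<le> k"
        have "Fc y k = Fc y1 (k - a)" using Fy k nu by simp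
        also have "\<dots> = Fc gs (k - a - cc z bs)" using G1[of "k - a"] k nu zm by simp
        finally show "Fc y k = Fc (alg_step y) (k - nu_of y)" using as nu zm by (simp add: diff_diff_add)
      qed
    next
      case True
      have zm: "zl z bs mod 2 = 1" using True by presburger
      have oddg: "odd (length gs)" using glen zm ev1 by presburger
      show ?thesis
      proof (cases "butlast gs")
        case Nil
        have "length gs - 1 = 0" using Nil by (metis length_butlast list.size(3))
        hence g1: "length gs = 1" using oddg by presburger
        then obtain g where gg: "gs = [g]" by (cases gs) auto
        have as: "alg_step y = []" using as0 True Nil by simp
        show ?thesis
        proof (intro conjI allI impI)
          show "length (alg_step y) + 2 * nu_of y = length y" using as nu glen zm yeq g1 by simp
          show "\<forall>v\<in>set (alg_step y). v \<ge> 0" using as by simp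
          fix k assume k: "nu_of y \<le> k"
          have "Fc y k = Fc y1 (k - a)" using Fy k nu by simp
          also have "\<dots> = Fc [g, 0] (k - a - cc z bs)" using G1[of "k - a"] k nu zm gg by simp
          also have "\<dots> = Fc [] (k - a - cc z bs - 1)" using gnn gg k nu zm by (intro E_small) auto
          finally show "Fc y k = Fc (alg_step y) (k - nu_of y)" using as nu zm by (simp add: diff_diff_add)
        qed
      next
        case (Cons g gs')
        have as: "alg_step y = (g + last gs) # gs'" using as0 True Cons by simp
        have gne: "gs \<noteq> []" using Cons by auto
        define l where "l = last gs"
        have hl: "gs = (g # gs') @ [l]" using append_butlast_last_id[OF gne] Cons l_def by simp
        have lg: "length gs = length gs' + 2" using hl by simp
        have gs'ne: "gs' \<noteq> []" using oddg lg by auto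
        have sg: "set gs = insert g (set gs' \<union> {l})" using hl by simp
        have nng: "g \<ge> 0" "l \<ge> 0" "\<forall>v\<in>set gs'. v \<ge> 0" using gnn sg by auto
        show ?thesis
        proof (intro conjI allI impI)
          show "length (alg_step y) + 2 * nu_of y = length y"
            using as nu glen zm yeq lg by simp
          show "\<forall>v\<in>set (alg_step y). v \<ge> 0" using as nng l_def by simp
          fix k assume k: "nu_of y \<le> k"
          have "Fc y k = Fc y1 (k - a)" using Fy k nu by simp
          also have "\<dots> = Fc (gs @ replicate (zl z bs mod 2) 0) (k - a - cc z bs)"
            using G1[of "k - a"] k nu by simp
          also have "gs @ replicate (zl z bs mod 2) 0 = (g # gs') @ [l, 0]" using hl zm by simp
          also have "Fc ((g # gs') @ [l, 0]) (k - a - cc z bs) = Fc (l # 0 # g # gs') (k - a - cc z bs)"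
            using Fc_rot_app[of "g # gs'" "[l, 0]"] by simp
          also have "\<dots> = Fc ((l + g) # gs') (k - a - cc z bs - 1)"
            using nng gs'ne k nu zm by (intro E2) auto
          finally show "Fc y k = Fc (alg_step y) (k - nu_of y)" using as nu zm l_def by (simp add: diff_diff_add add.commute)
        qed
      qed
    qed
  qed
qed



fun alt :: "real list \<Rightarrow> real" where
  "alt [] = 0"
| "alt (a # l) = a - alt l"

definition hw2 :: "real list \<Rightarrow> bool" where
  "hw2 l \<longleftrightarrow> (\<forall>j. even j \<longrightarrow> j \<le> length l \<longrightarrow> alt (take j l) \<ge> 0)"

lemma alt_append: "alt (l1 @ l2) = alt l1 + (if even (length l1) then alt l2 else - alt l2)"
  by (induction l1) auto

lemma alt_rep0: "alt (replicate n 0 @ l) = (if even n then alt l else - alt l)"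
  by (induction n) auto

lemma alt_shift: "alt (map (\<lambda>v. v - c) l) = alt l - (if odd (length l) then c else 0)"
  by (induction l) auto

lemma hw2_shift: "hw2 (map (\<lambda>v. v - c) x) = hw2 x"
  unfolding hw2_def by (auto simp: take_map alt_shift)

lemma hw2_lead:
  assumes h: "hw2 y" and nn: "\<forall>v\<in>set y. v \<ge> 0" and ev: "even (length y)"
  shows "even (length (takeWhile (\<lambda>v. v = 0) y))"
proof (rule ccontr)
  let ?n = "length (takeWhile (\<lambda>v. v = 0) y)"
  assume od: "odd ?n"
  have lt: "?n < length y"
  proof -
    have "?n \<le> length y" by (rule length_takeWhile_le)
    moreover have "?n \<noteq> length y" using od ev by auto
    ultimately show ?thesis by simp
  qed
  have yn: "y ! ?n \<noteq> 0" using nth_length_takeWhile[OF lt] by simp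
  hence pos: "y ! ?n > 0" using nn lt by (metis nth_mem order_le_less)
  have "take (Suc ?n) y = takeWhile (\<lambda>v. v = 0) y @ [y ! ?n]"
    by (metis lt take_Suc_conv_app_nth takeWhile_eq_take)
  also have "\<dots> = replicate ?n 0 @ [y ! ?n]" using takeWhile_zero[of y] by metis
  finally have "alt (take (Suc ?n) y) = - y ! ?n" using od by (simp add: alt_rep0)
  moreover have "alt (take (Suc ?n) y) \<ge> 0" using h od lt unfolding hw2_def by auto
  ultimately show False using pos by simp
qed

lemma GP:
  "j \<le> length (grp acc z bs) \<Longrightarrow> \<exists>j'\<le>length (acc # replicate z 0 @ flat bs).
      even (j + j') \<and> alt (take j (grp acc z bs)) = alt (take j' (acc # replicate z 0 @ flat bs))"
proof (induction acc z bs arbitrary: j rule: grp.induct)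
  case (1 acc z)
  then show ?case by (intro exI[of _ j]) (cases j, auto)
next
  case (2 acc z p z' bs)
  let ?R = "replicate z' 0 @ flat bs"
  show ?case
  proof (cases "odd z")
    case True
    have gg: "grp acc z ((p, z') # bs) = grp (acc + p) z' bs" using True by simp
    obtain j1 where j1: "j1 \<le> length ((acc + p) # ?R)" "even (j + j1)"
      "alt (take j (grp (acc + p) z' bs)) = alt (take j1 ((acc + p) # ?R))"
      using 2(1)[OF True, of j] 2(3) gg by auto
    show ?thesis
    proof (cases j1)
      case 0
      then show ?thesis using j1 gg by (intro exI[of _ 0]) auto
    next
      case (Suc i)
      have "take (j1 + z + 1) (acc # replicate z 0 @ flat ((p, z') # bs)) = acc # replicate z 0 @ p # take i ?R"
        using Suc by simp
      hence "alt (take (j1 + z + 1) (acc # replicate z 0 @ flat ((p, z') # bs))) = alt (take j1 ((acc + p) # ?R))"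
        using Suc True by (simp add: alt_rep0)
      moreover have "j1 + z + 1 \<le> length (acc # replicate z 0 @ flat ((p, z') # bs))" using j1(1) by simp
      moreover have "even (j + (j1 + z + 1))" using j1(2) True by presburger
      ultimately show ?thesis using j1(3) gg by metis
    qed
  next
    case False
    have gg: "grp acc z ((p, z') # bs) = acc # grp p z' bs" using False by simp
    show ?thesis
    proof (cases j)
      case 0
      then show ?thesis by (intro exI[of _ 0]) auto
    next
      case (Suc i)
      obtain j1 where j1: "j1 \<le> length (p # ?R)" "even (i + j1)"
        "alt (take i (grp p z' bs)) = alt (take j1 (p # ?R))"
        using 2(2)[OF False, of i] 2(3) gg Suc by auto
      have "take (1 + z + j1) (acc # replicate z 0 @ flat ((p, z') # bs)) = acc # replicate z 0 @ take j1 (p # ?R)"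
        by simp
      hence "alt (take (1 + z + j1) (acc # replicate z 0 @ flat ((p, z') # bs))) = alt (take j (grp acc z ((p, z') # bs)))"
        using Suc False j1(3) gg by (simp add: alt_rep0)
      moreover have "1 + z + j1 \<le> length (acc # replicate z 0 @ flat ((p, z') # bs))" using j1(1) by simp
      moreover have "even (j + (1 + z + j1))" using j1(2) False Suc by presburger
      ultimately show ?thesis by metis
    qed
  qed
qed

lemma hw2_step:
  assumes nn: "\<forall>v\<in>set y. v \<ge> 0" and ev: "even (length y)" and h: "hw2 y"
  shows "hw2 (alg_step y)"
proof -
  have lead: "even (length (takeWhile (\<lambda>v. v = 0) y))" using hw2_lead[OF h nn ev] .
  obtain a where la: "length (takeWhile (\<lambda>v. v = 0) y) = 2 * a" using lead by (auto elim!: evenE)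
  define y1 where "y1 = dropWhile (\<lambda>v. v = 0) y"
  have yeq: "y = replicate (2 * a) 0 @ y1"
    using takeWhile_dropWhile_id[of "\<lambda>v. v = 0" y] takeWhile_zero[of y] la y1_def by metis
  have h1: "hw2 y1" unfolding hw2_def
  proof (intro allI impI)
    fix j assume j: "even j" "j \<le> length y1"
    have "take (2 * a + j) y = replicate (2 * a) 0 @ take j y1" using yeq by simp
    hence "alt (take (2 * a + j) y) = alt (take j y1)" by (simp add: alt_rep0)
    moreover have "even (2 * a + j)" "2 * a + j \<le> length y" using j yeq by auto
    hence "alt (take (2 * a + j) y) \<ge> 0" using h unfolding hw2_def by blast
    ultimately show "alt (take j y1) \<ge> 0" by linarith
  qed
  show ?thesis
  proof (cases y1)
    case Nil
    have as: "alg_step y = []" unfolding alg_step_def y1_def[symmetric] Nil by simp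
    show ?thesis unfolding as hw2_def by simp
  next
    case (Cons v vs)
    obtain p z bs where bl: "blocks y1 = (p, z) # bs" using Cons by simp
    have fl: "flat ((p, z) # bs) = y1" using flat_blocks[of y1] bl by simp
    have nn1: "\<forall>v\<in>set y1. v \<ge> 0" using nn yeq by auto
    have nnp: "\<forall>v\<in>set (flat ((p, z) # bs)). v \<ge> 0" using fl nn1 by simp
    have p0: "p \<ge> 0" and nnb: "\<forall>v\<in>set (flat bs). v \<ge> 0" using nnp by auto
    define gs where "gs = grp p z bs"
    have gnn: "\<forall>v\<in>set gs. v \<ge> 0" using grp_nonneg[OF p0 nnb] gs_def by simp
    have hg: "hw2 gs" unfolding hw2_def
    proof (intro allI impI)
      fix j assume j: "even j" "j \<le> length gs"
      obtain j' where "j' \<le> length y1" "even (j + j')" "alt (take j gs) = alt (take j' y1)"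
        using GP[of j p z bs] j fl gs_def by auto
      thus "alt (take j gs) \<ge> 0" using h1 j unfolding hw2_def by auto
    qed
    have glen: "length gs + 2 * cc z bs + zl z bs mod 2 = length y1"
      using grp_len[of p z bs] gs_def by (simp add: fl[symmetric])
    have ev1: "even (length y1)" using ev yeq by simp
    have as0: "alg_step y = (if odd (zl z bs) then (case butlast gs of [] \<Rightarrow> [] | g # gs' \<Rightarrow> (g + last gs) # gs') else gs)"
      unfolding gs_def using bl y1_def zl_last[of p z bs] by (simp add: alg_step_def Let_def)
    show ?thesis
    proof (cases "odd (zl z bs)")
      case False
      then show ?thesis using as0 hg by simp
    next
      case True
      show ?thesis
      proof (cases "butlast gs")
        case Nil
        then show ?thesis using as0 True by (simp add: hw2_def)
      next
        case (Cons g gs')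
        have as: "alg_step y = (g + last gs) # gs'" using as0 True Cons by simp
        have gne: "gs \<noteq> []" using Cons by auto
        define l where "l = last gs"
        have hl: "gs = (g # gs') @ [l]" using append_butlast_last_id[OF gne] Cons l_def by simp
        have l0: "l \<ge> 0" using gnn hl by simp
        show ?thesis unfolding hw2_def as l_def[symmetric]
        proof (intro allI impI)
          fix j assume j: "even j" "j \<le> length ((g + l) # gs')"
          show "alt (take j ((g + l) # gs')) \<ge> 0"
          proof (cases j)
            case 0 then show ?thesis by simp
          next
            case (Suc i)
            have "take j gs = g # take i gs'" using hl Suc j by simp
            hence "alt (take j ((g + l) # gs')) = alt (take j gs) + l" using Suc by simp
            moreover have "alt (take j gs) \<ge> 0" using hg j hl unfolding hw2_def by simp
            ultimately show ?thesis using l0 by simp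
          qed
        qed
      qed
    qed
  qed
qed



lemma upt_Cons_Suc: "[0..<length (q # ps)] = 0 # map Suc [0..<length ps]"
  by (simp only: length_Cons upt_conv_Cons[OF zero_less_Suc] map_Suc_upt)

lemma lambdas_nth: "i < length ps \<Longrightarrow> lambdas ps ! i = (\<Sum>l<Suc i. fst (ps ! l))"
  by (simp add: lambdas_def)

lemma length_lambdas: "length (lambdas ps) = length ps" by (simp add: lambdas_def)

lemma lambdas_Cons0: "lambdas (q # ps) ! 0 = fst q"
  by (simp add: lambdas_nth)

lemma lambdas_ConsS: "i < length ps \<Longrightarrow> lambdas (q # ps) ! Suc i = fst q + lambdas ps ! i"
proof -
  assume i: "i < length ps"
  have "lambdas (q # ps) ! Suc i = (\<Sum>l<Suc (Suc i). fst ((q # ps) ! l))"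
    using i by (intro lambdas_nth) simp
  also have "\<dots> = fst ((q # ps) ! 0) + (\<Sum>l<Suc i. fst ((q # ps) ! Suc l))"
    by (rule sum.lessThan_Suc_shift)
  also have "\<dots> = fst q + lambdas ps ! i" using i by (simp add: lambdas_nth)
  finally show ?thesis .
qed

lemma ell_Cons: "ell_list (q # ps) = replicate (snd q) (fst q) @ map (\<lambda>v. fst q + v) (ell_list ps)"
proof -
  define h where "h = (\<lambda>i. replicate (snd ((q # ps) ! i)) (lambdas (q # ps) ! i))"
  have "ell_list (q # ps) = concat (map h (0 # map Suc [0..<length ps]))"
    unfolding ell_list_def h_def upt_Cons_Suc ..
  also have "\<dots> = h 0 @ concat (map (\<lambda>i. h (Suc i)) [0..<length ps])" by (simp add: map_map o_def)
  also have "h 0 = replicate (snd q) (fst q)" unfolding h_def by (simp add: lambdas_Cons0)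
  also have "map (\<lambda>i. h (Suc i)) [0..<length ps] = map (\<lambda>i. map (\<lambda>v. fst q + v) (replicate (snd (ps ! i)) (lambdas ps ! i))) [0..<length ps]"
    unfolding h_def by (intro map_cong) (auto simp: lambdas_ConsS)
  also have "concat \<dots> = map (\<lambda>v. fst q + v) (ell_list ps)"
    unfolding ell_list_def by (simp add: map_concat map_map o_def)
  finally show ?thesis .
qed

lemma ell_Nil: "ell_list [] = []" by (simp add: ell_list_def)

lemma sum_app_le: "k \<le> length R \<Longrightarrow> (\<Sum>j<k. (R @ L) ! j) = (\<Sum>j<k. R ! j)"
  by (intro sum.cong) (auto simp: nth_append)

lemma sum_app_ge: "(\<Sum>j<length R + m. (R @ L) ! j) = (\<Sum>j<length R. R ! j) + (\<Sum>j<m. L ! j)"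
proof (induction m)
  case 0 then show ?case using sum_app_le[of "length R" R L] by simp
next
  case (Suc m) then show ?case by (simp add: nth_append algebra_simps)
qed

lemma wt_shift: "length M = length x \<Longrightarrow> wt M (map (\<lambda>v. v - c) x) = wt M x - real (cnt M) * c"
proof (induction M x rule: list_induct2)
  case Nil then show ?case by simp
next
  case (Cons b M v x) then show ?case by (auto simp: algebra_simps)
qed

lemma Fc_shift:
  assumes "2 * k \<le> length x"
  shows "Fc (map (\<lambda>v. v - c) x) k = Fc x k - real k * c"
proof -
  have fe: "feas (map (\<lambda>v. v - c) x) k = feas x k" by (simp add: feas_def)
  have "(\<lambda>M. wt M (map (\<lambda>v. v - c) x)) ` feas x k = (\<lambda>v. v - real k * c) ` ((\<lambda>M. wt M x) ` feas x k)"
    by (auto simp: wt_shift feas_def image_image)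
  moreover have "Min ((\<lambda>v. v - real k * c) ` ((\<lambda>M. wt M x) ` feas x k)) = Min ((\<lambda>M. wt M x) ` feas x k) - real k * c"
    by (rule mono_Min_commute[symmetric]) (use finite_feas feas_ne[OF assms] in \<open>auto simp: mono_def\<close>)
  ultimately show ?thesis unfolding Fc_def fe by simp
qed

lemma Fc_mono2: "\<forall>v\<in>set y. v \<ge> 0 \<Longrightarrow> k \<le> k' \<Longrightarrow> 2 * k' \<le> length y \<Longrightarrow> Fc y k \<le> Fc y k'"
proof (induction k')
  case 0 then show ?case by simp
next
  case (Suc n)
  show ?case
  proof (cases "k = Suc n")
    case True then show ?thesis by simp
  next
    case False
    hence "Fc y k \<le> Fc y n" using Suc by simp
    moreover have "Fc y n \<le> Fc y (Suc n)" using Fc_mono Suc.prems feas_ne by simp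
    ultimately show ?thesis by simp
  qed
qed

lemma noadj_repF: "noadj (replicate n False)"
  by (induction n) (auto simp: noadj_Cons)

lemma wt_repF: "wt (replicate n False) y = 0"
proof (induction n arbitrary: y)
  case 0 then show ?case by simp
next
  case (Suc n) then show ?case by (cases y) auto
qed

lemma Fc_zero: "\<forall>v\<in>set y. v \<ge> 0 \<Longrightarrow> Fc y 0 = 0"
proof -
  assume nn: "\<forall>v\<in>set y. v \<ge> 0"
  have "replicate (length y) False \<in> feas y 0"
    using noadj_repF by (auto simp: feas_def cyc_ok_def cnt_def)
  hence "Fc y 0 \<le> 0" using Fc_le[of "replicate (length y) False" y 0] wt_repF by simp
  moreover have "Fc y 0 \<ge> 0" using Fc_nonneg[OF nn] feas_ne[of 0 y] by simp
  ultimately show ?thesis by simp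
qed

lemma main_ind:
  "\<forall>x M. length x = 2 * M \<longrightarrow> M \<ge> 1 \<longrightarrow> M \<le> f \<longrightarrow> hw2 x \<longrightarrow>
     length (ell_list (algI f x)) = M \<and> (\<forall>k\<in>{1..M}. (\<Sum>j<k. ell_list (algI f x) ! j) = Fc x k)"
proof (induction f)
  case 0 then show ?case by simp
next
  case (Suc f)
  show ?case
  proof (intro allI impI)
    fix x :: "real list" and M :: nat
    assume lx: "length x = 2 * M" and M1: "M \<ge> 1" and Mf: "M \<le> Suc f" and hx: "hw2 x"
    define \<mu> where "\<mu> = Min (set x)"
    define y where "y = map (\<lambda>v. v - \<mu>) x"
    define \<nu> where "\<nu> = nu_of y"
    have xne: "x \<noteq> []" using lx M1 by auto
    have nn: "\<forall>v\<in>set y. v \<ge> 0" unfolding y_def \<mu>_def by auto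
    have z0: "0 \<in> set y" unfolding y_def \<mu>_def using Min_in[of "set x"] xne by force
    have hy: "hw2 y" unfolding y_def using hx hw2_shift by simp
    have ly: "length y = 2 * M" using lx y_def by simp
    have lead: "even (length (takeWhile (\<lambda>v. v = 0) y))" using hw2_lead[OF hy nn] ly by simp
    have RR: "length (alg_step y) + 2 * \<nu> = length y \<and> (\<forall>v\<in>set (alg_step y). v \<ge> 0)
        \<and> (\<forall>k. \<nu> \<le> k \<longrightarrow> Fc y k = Fc (alg_step y) (k - \<nu>))"
      using R[OF nn _ lead] ly \<nu>_def by simp
    have nu1: "\<nu> \<ge> 1" using S_pos[of 0 y] z0 \<nu>_def nu_S by simp
    have Fx: "\<And>k. k \<le> M \<Longrightarrow> Fc x k = Fc y k + real k * \<mu>"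
      using Fc_shift[of _ x \<mu>] lx y_def by simp
    have lowk: "\<And>k. k \<le> \<nu> \<Longrightarrow> \<nu> \<le> M \<Longrightarrow> Fc y k = 0"
    proof -
      fix k assume k: "k \<le> \<nu>" "\<nu> \<le> M"
      have "Fc y k \<le> Fc y \<nu>" using Fc_mono2[OF nn k(1)] k ly by simp
      also have "\<dots> = Fc (alg_step y) 0" using RR by simp
      also have "\<dots> = 0" using Fc_zero RR by blast
      finally have "Fc y k \<le> 0" .
      moreover have "Fc y k \<ge> 0" using Fc_nonneg[OF nn] feas_ne[of k y] k ly by simp
      ultimately show "Fc y k = 0" by simp
    qed
    have nuM: "\<nu> \<le> M" using RR ly by simp
    show "length (ell_list (algI (Suc f) x)) = M \<and> (\<forall>k\<in>{1..M}. (\<Sum>j<k. ell_list (algI (Suc f) x) ! j) = Fc x k)"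
    proof (cases "M - \<nu> = 0")
      case True
      hence nM: "\<nu> = M" using nuM by simp
      have al: "algI (Suc f) x = [(\<mu>, \<nu>)]" using True lx
        by (simp add: \<mu>_def y_def \<nu>_def Let_def)
      have el: "ell_list (algI (Suc f) x) = replicate M \<mu>" using al nM by (simp add: ell_Cons ell_Nil)
      show ?thesis
      proof (intro conjI ballI)
        show "length (ell_list (algI (Suc f) x)) = M" using el by simp
        fix k assume k: "k \<in> {1..M}"
        have "(\<Sum>j<k. ell_list (algI (Suc f) x) ! j) = real k * \<mu>" using el k by simp
        also have "\<dots> = Fc x k" using Fx[of k] lowk[of k] k nM by simp
        finally show "(\<Sum>j<k. ell_list (algI (Suc f) x) ! j) = Fc x k" .
      qed
    next
      case False
      define x' where "x' = alg_step y"
      have al: "algI (Suc f) x = (\<mu>, \<nu>) # algI f x'" using False lx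
        by (simp add: \<mu>_def y_def \<nu>_def x'_def Let_def)
      have l1: "length x' + 2 * \<nu> = 2 * M" using RR ly x'_def by simp
      hence lx': "length x' = 2 * (M - \<nu>)" by presburger
      have hx': "hw2 x'" using hw2_step[OF nn _ hy] ly x'_def by simp
      have IH: "length (ell_list (algI f x')) = M - \<nu> \<and> (\<forall>k\<in>{1..M - \<nu>}. (\<Sum>j<k. ell_list (algI f x') ! j) = Fc x' k)"
        using Suc.IH lx' hx' False Mf nu1 by simp
      define L where "L = ell_list (algI f x')"
      have el: "ell_list (algI (Suc f) x) = replicate \<nu> \<mu> @ map (\<lambda>v. \<mu> + v) L"
        using al L_def by (simp add: ell_Cons)
      have nn': "\<forall>v\<in>set x'. v \<ge> 0" using RR x'_def by simp
      show ?thesis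
      proof (intro conjI ballI)
        show "length (ell_list (algI (Suc f) x)) = M" using el IH L_def nuM by simp
        fix k assume k: "k \<in> {1..M}"
        show "(\<Sum>j<k. ell_list (algI (Suc f) x) ! j) = Fc x k"
        proof (cases "k \<le> \<nu>")
          case True
          have "(\<Sum>j<k. ell_list (algI (Suc f) x) ! j) = (\<Sum>j<k. replicate \<nu> \<mu> ! j)"
            unfolding el using sum_app_le[of k "replicate \<nu> \<mu>"] True by simp
          also have "\<dots> = real k * \<mu>" using True by simp
          also have "\<dots> = Fc x k" using Fx[of k] lowk[of k] k True nuM by simp
          finally show ?thesis .
        next
          case False
          define m where "m = k - \<nu>"
          have km: "k = length (replicate \<nu> \<mu>) + m" using False m_def by simp
          have m1: "m \<in> {1..M - \<nu>}" using False k m_def by auto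
          have "(\<Sum>j<k. ell_list (algI (Suc f) x) ! j) = (\<Sum>j<\<nu>. replicate \<nu> \<mu> ! j) + (\<Sum>j<m. map (\<lambda>v. \<mu> + v) L ! j)"
            unfolding el km using sum_app_ge[where R="replicate \<nu> \<mu>" and m=m and L="map (\<lambda>v. \<mu> + v) L"] by simp
          also have "(\<Sum>j<m. map (\<lambda>v. \<mu> + v) L ! j) = (\<Sum>j<m. \<mu> + L ! j)"
            using IH L_def m1 by (intro sum.cong) auto
          also have "\<dots> = real m * \<mu> + Fc x' m" using IH L_def m1 by (simp add: sum.distrib)
          also have "Fc x' m = Fc y k" using RR x'_def False m_def by simp
          finally have "(\<Sum>j<k. ell_list (algI (Suc f) x) ! j) = real \<nu> * \<mu> + (real m * \<mu> + Fc y k)" by simp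
          also have "\<dots> = Fc x k" using Fx[of k] k m_def False by (simp add: algebra_simps of_nat_diff)
          finally show ?thesis .
        qed
      qed
    qed
  qed
qed



lemma noadj_nth: "noadj M \<longleftrightarrow> (\<forall>i. Suc i < length M \<longrightarrow> \<not> (M ! i \<and> M ! Suc i))"
proof (induction M rule: noadj.induct)
  case (1 a b l)
  have "(\<forall>i. Suc i < length (a # b # l) \<longrightarrow> \<not> ((a # b # l) ! i \<and> (a # b # l) ! Suc i))
      \<longleftrightarrow> \<not> (a \<and> b) \<and> (\<forall>i. Suc i < length (b # l) \<longrightarrow> \<not> ((b # l) ! i \<and> (b # l) ! Suc i))"
  proof
    assume h: "\<forall>i. Suc i < length (a # b # l) \<longrightarrow> \<not> ((a # b # l) ! i \<and> (a # b # l) ! Suc i)"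
    show "\<not> (a \<and> b) \<and> (\<forall>i. Suc i < length (b # l) \<longrightarrow> \<not> ((b # l) ! i \<and> (b # l) ! Suc i))"
    proof
      show "\<not> (a \<and> b)" using h[rule_format, of 0] by simp
      show "\<forall>i. Suc i < length (b # l) \<longrightarrow> \<not> ((b # l) ! i \<and> (b # l) ! Suc i)"
        using h by (metis Suc_less_eq length_Cons nth_Cons_Suc)
    qed
  next
    assume h: "\<not> (a \<and> b) \<and> (\<forall>i. Suc i < length (b # l) \<longrightarrow> \<not> ((b # l) ! i \<and> (b # l) ! Suc i))"
    show "\<forall>i. Suc i < length (a # b # l) \<longrightarrow> \<not> ((a # b # l) ! i \<and> (a # b # l) ! Suc i)"
    proof (intro allI impI)
      fix i assume i: "Suc i < length (a # b # l)"
      show "\<not> ((a # b # l) ! i \<and> (a # b # l) ! Suc i)"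
      proof (cases i)
        case 0 then show ?thesis using h by simp
      next
        case (Suc i') then show ?thesis using h i by (metis Suc_less_eq length_Cons nth_Cons_Suc)
      qed
    qed
  qed
  then show ?case using 1 by simp
next
  case ("2_1") then show ?case by simp
next
  case ("2_2" v) then show ?case by simp
qed

lemma gap_mono:
  fixes I :: "nat list"
  assumes g: "\<forall>j. Suc j < length I \<longrightarrow> I ! j + 1 < I ! Suc j"
  shows "i < j \<Longrightarrow> j < length I \<Longrightarrow> I ! i + 1 < I ! j"
proof (induction j)
  case 0 then show ?case by simp
next
  case (Suc j)
  show ?case
  proof (cases "i = j")
    case True then show ?thesis using g Suc.prems by simp
  next
    case False
    hence "I ! i + 1 < I ! j" using Suc by simp
    moreover have "I ! j + 1 < I ! Suc j" using g Suc.prems by simp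
    ultimately show ?thesis by linarith
  qed
qed

lemma wt_sum: "length M = length y \<Longrightarrow> wt M y = (\<Sum>i<length y. if M ! i then y ! i else 0)"
  by (simp add: wt_def sum_list_sum_nth atLeast0LessThan)

lemma wt_set: "length M = length y \<Longrightarrow> wt M y = (\<Sum>i\<in>{i. i < length y \<and> M ! i}. y ! i)"
proof -
  assume l: "length M = length y"
  have "{i. i < length y \<and> M ! i} = {..<length y} \<inter> {i. M ! i}" by auto
  hence "(\<Sum>i\<in>{i. i < length y \<and> M ! i}. y ! i) = (\<Sum>i<length y. if i \<in> {i. M ! i} then y ! i else 0)"
    by (simp add: sum.inter_restrict)
  thus ?thesis using wt_sum[OF l] by simp
qed

lemma cnt_card: "cnt M = card {i. i < length M \<and> M ! i}"
  by (simp add: cnt_def length_filter_conv_card)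

lemma H_Fc:
  assumes lA: "length A = 2 * N" and N1: "N \<ge> 1" and k1: "k \<ge> 1"
  shows "H A N k = Fc A k"
proof -
  have "{(\<Sum>i\<leftarrow>I. A ! (i - 1)) | I. admissible N k I} = (\<lambda>M. wt M A) ` feas A k"
  proof (intro set_eqI iffI)
    fix w assume "w \<in> {(\<Sum>i\<leftarrow>I. A ! (i - 1)) | I. admissible N k I}"
    then obtain I where w: "w = (\<Sum>i\<leftarrow>I. A ! (i - 1))" and ad: "admissible N k I" by auto
    have lI: "length I = k" and sI: "set I \<subseteq> {1..2 * N}"
      and g: "\<forall>j. Suc j < length I \<longrightarrow> I ! j + 1 < I ! Suc j"
      and nhl: "\<not> (hd I = 1 \<and> last I = 2 * N)"
      using ad by (auto simp: admissible_def)
    have gm: "\<And>i j. i < j \<Longrightarrow> j < length I \<Longrightarrow> I ! i + 1 < I ! j" using gap_mono[OF g] by blast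
    have dI: "distinct I"
      unfolding distinct_conv_nth
    proof (intro allI impI)
      fix i j assume "i < length I" "j < length I" "i \<noteq> j"
      thus "I ! i \<noteq> I ! j" using gm[of i j] gm[of j i] by (cases "i < j") auto
    qed
    define M where "M = map (\<lambda>i. Suc i \<in> set I) [0..<2 * N]"
    have lM: "length M = length A" using lA M_def by simp
    have Mi: "\<And>i. i < 2 * N \<Longrightarrow> M ! i = (Suc i \<in> set I)" using M_def by simp
    have na: "noadj M" unfolding noadj_nth
    proof (intro allI impI notI)
      fix i assume i: "Suc i < length M" and b: "M ! i \<and> M ! Suc i"
      have "Suc i \<in> set I" "Suc (Suc i) \<in> set I" using b i Mi M_def by auto
      then obtain a b where a: "a < length I" "I ! a = Suc i" and bb: "b < length I" "I ! b = Suc (Suc i)"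
        by (metis in_set_conv_nth)
      show False using gm[of a b] gm[of b a] a bb by (cases "a < b"; cases "b < a") auto
    qed
    have Mne: "M \<noteq> []" using M_def N1 by simp
    have hdl: "\<not> (hd M \<and> last M)"
    proof
      assume hl: "hd M \<and> last M"
      have "M ! 0" using hl Mne by (simp add: hd_conv_nth)
      hence "1 \<in> set I" using Mi N1 by simp
      then obtain a where a: "a < length I" "I ! a = 1" by (metis in_set_conv_nth)
      have "M ! (2 * N - 1)" using hl Mne M_def by (simp add: last_conv_nth)
      hence "2 * N \<in> set I" using Mi N1 by simp
      then obtain b where b: "b < length I" "I ! b = 2 * N" by (metis in_set_conv_nth)
      have Ine: "I \<noteq> []" using a by auto
      have "I ! 0 \<in> set I" using Ine by simp
      hence "I ! 0 \<ge> 1" using sI by auto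
      moreover have "I ! 0 \<le> I ! a" using gm[of 0 a] a by (cases a) auto
      ultimately have h1: "hd I = 1" using a Ine by (simp add: hd_conv_nth)
      have "I ! (length I - 1) \<in> set I" using Ine by simp
      hence "I ! (length I - 1) \<le> 2 * N" using sI by auto
      moreover have "I ! b \<le> I ! (length I - 1)"
      proof (cases "b = length I - 1")
        case True then show ?thesis by simp
      next
        case False
        hence "b < length I - 1" using b by linarith
        moreover have "length I - 1 < length I" using b by simp
        ultimately have "I ! b + 1 < I ! (length I - 1)" using gm by blast
        then show ?thesis by simp
      qed
      ultimately have h2: "last I = 2 * N" using b Ine by (simp add: last_conv_nth)
      show False using h1 h2 nhl by simp
    qed
    have setM: "{i. i < length M \<and> M ! i} = {i. i < 2 * N \<and> Suc i \<in> set I}" using Mi M_def by auto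
    have img: "Suc ` {i. i < 2 * N \<and> Suc i \<in> set I} = set I"
    proof (intro set_eqI iffI)
      fix x assume "x \<in> set I"
      hence "x \<ge> 1" "x \<le> 2 * N" using sI by auto
      thus "x \<in> Suc ` {i. i < 2 * N \<and> Suc i \<in> set I}" using \<open>x \<in> set I\<close>
        by (intro image_eqI[of _ _ "x - 1"]) auto
    qed auto
    have cM: "cnt M = k"
    proof -
      have "cnt M = card {i. i < 2 * N \<and> Suc i \<in> set I}" using cnt_card setM by simp
      also have "\<dots> = card (set I)" using img card_image[of Suc] by (metis inj_Suc inj_on_subset subset_UNIV)
      also have "\<dots> = k" using dI lI distinct_card by blast
      finally show ?thesis .
    qed
    have "M \<in> feas A k" using lM na hdl Mne cM by (simp add: feas_def cyc_ok_def)
    moreover have "wt M A = w"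
    proof -
      have "w = (\<Sum>i\<in>set I. A ! (i - 1))" using w dI by (simp add: sum_list_distinct_conv_sum_set)
      also have "\<dots> = (\<Sum>i\<in>Suc ` {i. i < 2 * N \<and> Suc i \<in> set I}. A ! (i - 1))" using img by simp
      also have "\<dots> = (\<Sum>i\<in>{i. i < 2 * N \<and> Suc i \<in> set I}. A ! i)" by (simp add: sum.reindex)
      also have "\<dots> = wt M A"
      proof -
        have "length M = 2 * N" using M_def by simp
        thus ?thesis using wt_set[OF lM] setM lA by simp
      qed
      finally show ?thesis by simp
    qed
    ultimately show "w \<in> (\<lambda>M. wt M A) ` feas A k" by force
  next
    fix w assume "w \<in> (\<lambda>M. wt M A) ` feas A k"
    then obtain M where w: "w = wt M A" and M: "M \<in> feas A k" by auto
    have lM: "length M = 2 * N" and cyc: "cyc_ok M" and cM: "cnt M = k" using M lA by (auto simp: feas_def)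
    have na: "\<And>i. Suc i < 2 * N \<Longrightarrow> \<not> (M ! i \<and> M ! Suc i)" using cyc lM by (auto simp: cyc_ok_def noadj_nth)
    define F where "F = filter (\<lambda>i. M ! i) [0..<2 * N]"
    define I where "I = map Suc F"
    have sF: "set F = {i. i < 2 * N \<and> M ! i}" using F_def by auto
    have sortF: "sorted_wrt (<) F" unfolding F_def by (intro sorted_wrt_filter) simp
    have dF: "distinct F" using F_def by simp
    have lF: "length F = k"
    proof -
      have "length F = card {i. i < length [0..<2 * N] \<and> M ! ([0..<2 * N] ! i)}"
        unfolding F_def by (rule length_filter_conv_card)
      also have "\<dots> = card {i. i < length M \<and> M ! i}" using lM
        by (intro arg_cong[where f=card]) auto
      finally show ?thesis using cM cnt_card by simp
    qed
    have ad: "admissible N k I" unfolding admissible_def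
    proof (intro conjI allI impI)
      show "length I = k" using lF I_def by simp
      show "set I \<subseteq> {1..2 * N}"
      proof
        fix x assume "x \<in> set I"
        then obtain i where i: "i \<in> set F" "x = Suc i" unfolding I_def by auto
        hence "i < 2 * N" using sF by blast
        thus "x \<in> {1..2 * N}" using i by simp
      qed
      fix j assume j: "Suc j < k"
      have lt: "F ! j < F ! Suc j" using sorted_wrt_nth_less[OF sortF, of j "Suc j"] j lF by simp
      have m1: "F ! j \<in> set F" "F ! Suc j \<in> set F" using j lF by auto
      have "F ! Suc j \<noteq> F ! j + 1"
      proof
        assume e: "F ! Suc j = F ! j + 1"
        have "M ! (F ! j)" "M ! Suc (F ! j)" "Suc (F ! j) < 2 * N" using m1 sF e by auto
        thus False using na by blast
      qed
      thus "I ! j + 1 < I ! Suc j" using lt j lF I_def by simp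
    next
      show "\<not> (hd I = 1 \<and> last I = 2 * N)"
      proof
        assume h: "hd I = 1 \<and> last I = 2 * N"
        have Ine: "I \<noteq> []" using lF k1 I_def by auto
        have "hd I \<in> set I" "last I \<in> set I" using Ine by auto
        hence i1: "1 \<in> Suc ` set F" and i2: "2 * N \<in> Suc ` set F" using h I_def by simp_all
        from i1 obtain a where a: "a \<in> set F" "1 = Suc a" by blast
        from i2 obtain b where b: "b \<in> set F" "2 * N = Suc b" by blast
        have "0 \<in> set F" "2 * N - 1 \<in> set F" using a b by simp_all
        hence "M ! 0" "M ! (2 * N - 1)" using sF by auto
        moreover have "M \<noteq> []" using lM N1 by auto
        ultimately have "hd M \<and> last M" using lM by (simp add: hd_conv_nth last_conv_nth)
        thus False using cyc \<open>M \<noteq> []\<close> by (simp add: cyc_ok_def)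
      qed
    qed
    moreover have "(\<Sum>i\<leftarrow>I. A ! (i - 1)) = w"
    proof -
      have "(\<Sum>i\<leftarrow>I. A ! (i - 1)) = (\<Sum>i\<leftarrow>F. A ! i)" using I_def by (simp add: o_def)
      also have "\<dots> = (\<Sum>i\<in>set F. A ! i)" using dF by (simp add: sum_list_distinct_conv_sum_set)
      also have "\<dots> = wt M A" using wt_set[of M A] lM lA sF by simp
      finally show ?thesis using w by simp
    qed
    ultimately show "w \<in> {(\<Sum>i\<leftarrow>I. A ! (i - 1)) | I. admissible N k I}" by blast
  qed
  thus ?thesis unfolding H_def Fc_def by simp
qed

lemma alt_take2: "2 * k \<le> length A \<Longrightarrow> alt (take (2 * k) A) = (\<Sum>i=1..k. A ! (2 * i - 2) - A ! (2 * i - 1))"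
proof (induction k)
  case 0 then show ?case by simp
next
  case (Suc k)
  have t: "take (2 * Suc k) A = take (2 * k) A @ [A ! (2 * k), A ! (2 * k + 1)]"
  proof -
    have "take (Suc (Suc (2 * k))) A = take (Suc (2 * k)) A @ [A ! Suc (2 * k)]"
      using Suc.prems by (intro take_Suc_conv_app_nth) simp
    also have "take (Suc (2 * k)) A = take (2 * k) A @ [A ! (2 * k)]"
      using Suc.prems by (intro take_Suc_conv_app_nth) simp
    finally show ?thesis by simp
  qed
  have "alt (take (2 * Suc k) A) = alt (take (2 * k) A) + (A ! (2 * k) - A ! (2 * k + 1))"
    unfolding t alt_append using Suc.prems by simp
  also have "\<dots> = (\<Sum>i=1..k. A ! (2 * i - 2) - A ! (2 * i - 1)) + (A ! (2 * Suc k - 2) - A ! (2 * Suc k - 1))"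
    using Suc by simp
  finally show ?case by simp
qed

lemma hw_hw2: "highest_weight A \<Longrightarrow> even (length A) \<Longrightarrow> hw2 A"
  unfolding hw2_def
proof (intro allI impI)
  fix j assume hw: "highest_weight A" and ev: "even (length A)" and j: "even j" "j \<le> length A"
  obtain k where k: "j = 2 * k" using j by (auto elim!: evenE)
  show "alt (take j A) \<ge> 0"
  proof (cases "k = 0")
    case True then show ?thesis using k by simp
  next
    case False
    hence "k \<in> {1..length A div 2}" using k j ev by auto
    hence "(\<Sum>i=1..k. A ! (2 * i - 2) - A ! (2 * i - 1)) \<ge> 0" using hw unfolding highest_weight_def by blast
    thus ?thesis using alt_take2[of k A] k j by simp
  qed
qed

theorem mainTheorem7:
  fixes A :: "real list" and N :: nat
  assumes "N \<ge> 1"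
    and "length A = 2 * N"
    and "\<forall>a\<in>set A. a > 0"
    and "(\<Sum>l=1..N. A ! (2*l - 1)) < (\<Sum>l=1..N. A ! (2*l - 2))"
    and "highest_weight A"
  shows "length (ell_list (algI N A)) = N
     \<and> (\<forall>k\<in>{1..N}. (\<Sum>j<k. ell_list (algI N A) ! j) = H A N k)"
proof -
  have h2: "hw2 A" using hw_hw2[OF assms(5)] assms(2) by simp
  have m: "length (ell_list (algI N A)) = N \<and> (\<forall>k\<in>{1..N}. (\<Sum>j<k. ell_list (algI N A) ! j) = Fc A k)"
    using main_ind[of N] assms(1,2) h2 by blast
  show ?thesis using m H_Fc[OF assms(2) assms(1)] by auto
qed


end
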